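(* Let $a\in L_{1,\mathrm{loc}}(\mathbb C^d)$ be not a.e. zero, and suppose there is $c>0$ such that $|a(z)|e^{-|z|^2}=O(e^{-c|z|})$ as $|z|\to\infty$. Then the Toeplitz operator $T_a$ on the Fock space $\mathcal F^2(\mathbb C^d)$ defined by the form $\mathbf F_a(u,v)=\pi^{-d}\int_{\mathbb C^d}a(z)u(z)\overline{v(z)}e^{-|z|^2}dV(z)$ is not the zero operator; more precisely, there exist multi-indices $\alpha,\beta\in\mathbb Z_+^d$ such that $\int_{\mathbb C^d}a(z)z^\alpha\bar z^\beta e^{-|z|^2}\,dV(z)\ne0$.
   Context: $dV$ is Lebesgue measure on $\mathbb C^d\cong\mathbb R^{2d}$. The Fock space $\mathcal F^2(\mathbb C^d)$ consists of entire functions $u$ on $\mathbb C^d$ with $\pi^{-d}\int_{\mathbb C^d}|u(z)|^2e^{-|z|^2}dV(z)<\infty$; its monomials $z^\alpha$ span a dense subspace. For multi-indices, $z^\alpha=z_1^{\alpha_1}\cdots z_d^{\alpha_d}$. The Toeplitz operator $T_a$ is the operator with $\langle T_au,v\rangle=\mathbf F_a(u,v)$ on those $u,v$ (e.g. polynomials) for which the integral converges. *)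

theory Defs
  imports "HOL-Analysis.Analysis"
begin

text \<open>Points of C^d are modelled as complex ^ 'd for a finite index type 'd
  (d = CARD('d)); lborel on this type is Lebesgue measure on R^(2d).\<close>

definition locally_integrable :: "(complex ^ 'd \<Rightarrow> complex) \<Rightarrow> bool" where
  "locally_integrable a \<longleftrightarrow> a \<in> borel_measurable lborel \<and>
     (\<forall>K. compact K \<longrightarrow> set_integrable lborel K a)"

definition cmonom :: "('d \<Rightarrow> nat) \<Rightarrow> complex ^ 'd \<Rightarrow> complex" where
  "cmonom \<alpha> z = (\<Prod>i\<in>UNIV. (z $ i) ^ \<alpha> i)"

end

theory Submission
  imports Defs
begin


definition trigp :: "('a::euclidean_space \<Rightarrow> complex) \<Rightarrow> bool" where
  "trigp g \<longleftrightarrow> (\<exists>xs::(complex \<times> 'a) list. \<forall>x. g x = (\<Sum>(c,s)\<leftarrow>xs. c * exp (\<i> * complex_of_real (s \<bullet> x))))"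

lemma sum_list_prod_product:
  fixes f :: "'b \<Rightarrow> 'c::comm_semiring_0"
  shows "(\<Sum>x\<leftarrow>xs. f x) * (\<Sum>y\<leftarrow>ys. g y) = (\<Sum>(x,y)\<leftarrow>List.product xs ys. f x * g y)"
  by (induction xs) (auto simp: distrib_right sum_list_const_mult o_def)

lemma trigp_const: "trigp (\<lambda>x. c)"
  unfolding trigp_def by (rule exI[of _ "[(c,0)]"]) simp

lemma trigp_exp: "trigp (\<lambda>x. c * exp (\<i> * complex_of_real (s \<bullet> x)))"
  unfolding trigp_def by (rule exI[of _ "[(c,s)]"]) simp

lemma trigp_add: assumes "trigp f" "trigp g" shows "trigp (\<lambda>x. f x + g x)"
proof -
  obtain xs ys where xs: "\<And>x. f x = (\<Sum>(c,s)\<leftarrow>xs. c * exp (\<i> * complex_of_real (s \<bullet> x)))"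
    and ys: "\<And>x. g x = (\<Sum>(c,s)\<leftarrow>ys. c * exp (\<i> * complex_of_real (s \<bullet> x)))"
    using assms unfolding trigp_def by blast
  show ?thesis unfolding trigp_def by (rule exI[of _ "xs @ ys"]) (simp add: xs ys)
qed

lemma trigp_mult: assumes "trigp f" "trigp g" shows "trigp (\<lambda>x. f x * g x)"
proof -
  obtain xs ys where xs: "\<And>x. f x = (\<Sum>(c,s)\<leftarrow>xs. c * exp (\<i> * complex_of_real (s \<bullet> x)))"
    and ys: "\<And>x. g x = (\<Sum>(c,s)\<leftarrow>ys. c * exp (\<i> * complex_of_real (s \<bullet> x)))"
    using assms unfolding trigp_def by blast
  define zs where "zs = map (\<lambda>((c,s),(d,t)). (c*d, s+t)) (List.product xs ys)"
  show ?thesis unfolding trigp_def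
  proof (rule exI[of _ zs], intro allI)
    fix x
    have "f x * g x = (\<Sum>(p,q)\<leftarrow>List.product xs ys. (case p of (c,s) \<Rightarrow> c * exp (\<i> * complex_of_real (s \<bullet> x))) * (case q of (c,s) \<Rightarrow> c * exp (\<i> * complex_of_real (s \<bullet> x))))"
      unfolding xs ys by (rule sum_list_prod_product)
    also have "\<dots> = (\<Sum>(c,s)\<leftarrow>zs. c * exp (\<i> * complex_of_real (s \<bullet> x)))"
      unfolding zs_def by (simp add: o_def case_prod_unfold inner_add_left exp_add algebra_simps distrib_left)
    finally show "f x * g x = (\<Sum>(c,s)\<leftarrow>zs. c * exp (\<i> * complex_of_real (s \<bullet> x)))" .
  qed
qed

lemma trigp_prod: "finite I \<Longrightarrow> (\<And>i. i \<in> I \<Longrightarrow> trigp (f i)) \<Longrightarrow> trigp (\<lambda>x. \<Prod>i\<in>I. f i x)"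
  by (induction I rule: finite_induct) (auto intro: trigp_const trigp_mult)

lemma integrable_exp_mult:
  fixes f :: "'a::euclidean_space \<Rightarrow> complex"
  assumes "integrable lborel f"
  shows "integrable lborel (\<lambda>x. f x * (c * exp (\<i> * complex_of_real (s \<bullet> x))))"
proof -
  have "integrable lborel (\<lambda>x. c * f x)" using assms by simp
  have [measurable]: "f \<in> borel_measurable lborel" using assms by (rule borel_measurable_integrable)
  show ?thesis
    by (rule Bochner_Integration.integrable_bound[OF \<open>integrable lborel (\<lambda>x. c * f x)\<close>]) (measurable, auto simp: norm_mult)
qed

lemma trigp_integral:
  fixes f :: "'a::euclidean_space \<Rightarrow> complex"
  assumes f: "integrable lborel f" and F: "\<And>s. (LINT x|lborel. f x * exp (\<i> * complex_of_real (s \<bullet> x))) = 0"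
    and g: "trigp g"
  shows "(LINT x|lborel. f x * g x) = 0"
proof -
  obtain xs where xs: "\<And>x. g x = (\<Sum>(c,s)\<leftarrow>xs. c * exp (\<i> * complex_of_real (s \<bullet> x)))"
    using g unfolding trigp_def by blast
  have "(LINT x|lborel. f x * (\<Sum>(c,s)\<leftarrow>ys. c * exp (\<i> * complex_of_real (s \<bullet> x)))) = 0"
     "integrable lborel (\<lambda>x. f x * (\<Sum>(c,s)\<leftarrow>ys. c * exp (\<i> * complex_of_real (s \<bullet> x))))" for ys
  proof (induction ys)
    case Nil show "(LINT x|lborel. f x * (\<Sum>(c,s)\<leftarrow>[]. c * exp (\<i> * complex_of_real (s \<bullet> x)))) = 0" by simp
    case Nil show "integrable lborel (\<lambda>x. f x * (\<Sum>(c,s)\<leftarrow>[]. c * exp (\<i> * complex_of_real (s \<bullet> x))))" by simp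
  next
    case (Cons y ys)
    obtain c s where y: "y = (c,s)" by force
    have i1: "integrable lborel (\<lambda>x. f x * (c * exp (\<i> * complex_of_real (s \<bullet> x))))"
      by (rule integrable_exp_mult[OF f])
    have e: "(\<lambda>x. f x * (\<Sum>(c,s)\<leftarrow>y#ys. c * exp (\<i> * complex_of_real (s \<bullet> x)))) =
      (\<lambda>x. f x * (c * exp (\<i> * complex_of_real (s \<bullet> x))) + f x * (\<Sum>(c,s)\<leftarrow>ys. c * exp (\<i> * complex_of_real (s \<bullet> x))))"
      by (simp add: y distrib_left)
    have z: "(LINT x|lborel. f x * (c * exp (\<i> * complex_of_real (s \<bullet> x)))) = 0"
      using F[of s] by (simp add: mult.left_commute)
    show "(LINT x|lborel. f x * (\<Sum>(c,s)\<leftarrow>y#ys. c * exp (\<i> * complex_of_real (s \<bullet> x)))) = 0"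
      unfolding e using Cons i1 z by (simp add: integral_add)
    show "integrable lborel (\<lambda>x. f x * (\<Sum>(c,s)\<leftarrow>y#ys. c * exp (\<i> * complex_of_real (s \<bullet> x))))"
      unfolding e using Cons i1 by auto
  qed
  then show ?thesis by (simp add: xs)
qed



definition circp :: "(complex \<Rightarrow> complex) \<Rightarrow> bool" where
  "circp P \<longleftrightarrow> (\<exists>xs::(complex \<times> nat \<times> nat) list. \<forall>w. P w = (\<Sum>(c,j,k)\<leftarrow>xs. c * w^j * cnj w^k))"

lemma circp_const: "circp (\<lambda>w. c)"
  unfolding circp_def by (rule exI[of _ "[(c,0,0)]"]) simp

lemma circp_add: assumes "circp f" "circp g" shows "circp (\<lambda>x. f x + g x)"
proof -
  obtain xs ys where xs: "\<And>w. f w = (\<Sum>(c,j,k)\<leftarrow>xs. c * w^j * cnj w^k)"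
    and ys: "\<And>w. g w = (\<Sum>(c,j,k)\<leftarrow>ys. c * w^j * cnj w^k)"
    using assms unfolding circp_def by blast
  show ?thesis unfolding circp_def by (rule exI[of _ "xs @ ys"]) (simp add: xs ys)
qed

lemma circp_mult: assumes "circp f" "circp g" shows "circp (\<lambda>x. f x * g x)"
proof -
  obtain xs ys where xs: "\<And>w. f w = (\<Sum>(c,j,k)\<leftarrow>xs. c * w^j * cnj w^k)"
    and ys: "\<And>w. g w = (\<Sum>(c,j,k)\<leftarrow>ys. c * w^j * cnj w^k)"
    using assms unfolding circp_def by blast
  define zs where "zs = map (\<lambda>((c,j,k),(d,j',k')). (c*d, j+j', k+k')) (List.product xs ys)"
  show ?thesis unfolding circp_def
  proof (rule exI[of _ zs], intro allI)
    fix w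
    have "f w * g w = (\<Sum>(p,q)\<leftarrow>List.product xs ys. (case p of (c,j,k) \<Rightarrow> c * w^j * cnj w^k) * (case q of (c,j,k) \<Rightarrow> c * w^j * cnj w^k))"
      unfolding xs ys by (rule sum_list_prod_product)
    also have "\<dots> = (\<Sum>(c,j,k)\<leftarrow>zs. c * w^j * cnj w^k)"
      unfolding zs_def by (simp add: o_def case_prod_unfold power_add algebra_simps)
    finally show "f w * g w = (\<Sum>(c,j,k)\<leftarrow>zs. c * w^j * cnj w^k)" .
  qed
qed

lemma circp_cont: "circp P \<Longrightarrow> continuous_on S P"
proof -
  assume "circp P"
  then obtain xs where xs: "\<And>w. P w = (\<Sum>(c,j,k)\<leftarrow>xs. c * w^j * cnj w^k)"
    unfolding circp_def by blast
  have "continuous_on S (\<lambda>w. (\<Sum>(c,j,k)\<leftarrow>ys. c * w^j * cnj w^k))" for ys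
    by (induction ys) (auto intro!: continuous_intros simp: case_prod_unfold)
  then show ?thesis by (simp add: xs[abs_def])
qed

definition RR :: "(complex \<Rightarrow> real) set" where
  "RR = {h. \<exists>P. circp P \<and> (\<forall>w. complex_of_real (h w) = P w)}"

interpretation circ: function_ring_on RR "sphere 0 1"
proof
  show "compact (sphere (0::complex) 1)" by simp
next
  fix f assume "f \<in> RR"
  then obtain P where P: "circp P" "\<And>w. complex_of_real (f w) = P w" unfolding RR_def by blast
  have "f = (\<lambda>w. Re (P w))" using P(2) by (metis Re_complex_of_real)
  then show "continuous_on (sphere 0 1) f"
    using circp_cont[OF P(1)] by (auto intro!: continuous_intros)
next
  fix f g assume "f \<in> RR" "g \<in> RR"
  then obtain P Q where P: "circp P" "\<And>w. complex_of_real (f w) = P w"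
    and Q: "circp Q" "\<And>w. complex_of_real (g w) = Q w" unfolding RR_def by blast
  show "(\<lambda>x. f x + g x) \<in> RR" unfolding RR_def
    using circp_add[OF P(1) Q(1)] P(2) Q(2) by force
  show "(\<lambda>x. f x * g x) \<in> RR" unfolding RR_def
    using circp_mult[OF P(1) Q(1)] P(2) Q(2) by force
next
  fix c show "(\<lambda>_. c) \<in> RR" unfolding RR_def using circp_const[of "complex_of_real c"] by force
next
  fix x y :: complex assume "x \<noteq> y"
  have re: "(\<lambda>w. Re w) \<in> RR" unfolding RR_def
  proof (intro CollectI exI conjI allI)
    show "circp (\<lambda>w. (\<Sum>(c,j,k)\<leftarrow>[(1/2,1,0),(1/2,0,1)]. c * w^j * cnj w^k))"
      unfolding circp_def by blast
    show "complex_of_real (Re w) = (\<Sum>(c,j,k)\<leftarrow>[(1/2,1,0),(1/2,0,1)]. c * w^j * cnj w^k)" for w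
      by (simp add: complex_eq_iff)
  qed
  have im: "(\<lambda>w. Im w) \<in> RR" unfolding RR_def
  proof (intro CollectI exI conjI allI)
    show "circp (\<lambda>w. (\<Sum>(c,j,k)\<leftarrow>[(-\<i>/2,1,0),(\<i>/2,0,1)]. c * w^j * cnj w^k))"
      unfolding circp_def by blast
    show "complex_of_real (Im w) = (\<Sum>(c,j,k)\<leftarrow>[(-\<i>/2,1,0),(\<i>/2,0,1)]. c * w^j * cnj w^k)" for w
      by (simp add: complex_eq_iff)
  qed
  show "\<exists>f\<in>RR. f x \<noteq> f y"
    using \<open>x \<noteq> y\<close> re im by (metis complex_eqI)
qed

lemma SW_circ:
  assumes "continuous_on (sphere 0 1) G" "e > 0"
  shows "\<exists>h\<in>RR. \<forall>w\<in>sphere 0 1. \<bar>h w - G w\<bar> < e"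
proof -
  obtain F where F: "F \<in> UNIV \<rightarrow> RR" "uniform_limit (sphere 0 1) F G sequentially"
    using circ.Stone_Weierstrass[OF assms(1)] by blast
  then obtain N where "\<forall>n\<ge>N. \<forall>w\<in>sphere 0 1. dist (F n w) (G w) < e"
    using assms(2) unfolding uniform_limit_iff eventually_sequentially by blast
  then show ?thesis using F(1) by (intro bexI[of _ "F N"]) (auto simp: dist_real_def)
qed

lemma circp_trig:
  assumes "circp P"
  shows "trigp (\<lambda>y::real. P (exp (\<i> * complex_of_real (\<theta> * y))))"
proof -
  obtain xs where xs: "\<And>w. P w = (\<Sum>(c,j,k)\<leftarrow>xs. c * w^j * cnj w^k)"
    using assms unfolding circp_def by blast
  have e: "exp (\<i> * complex_of_real (\<theta> * y)) ^ j * cnj (exp (\<i> * complex_of_real (\<theta> * y))) ^ k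
      = exp (\<i> * complex_of_real (((real j - real k) * \<theta>) \<bullet> y))" for j k y
  proof -
    have "exp (\<i> * complex_of_real (\<theta> * y)) ^ j = exp (of_nat j * (\<i> * complex_of_real (\<theta> * y)))"
      by (rule exp_of_nat_mult[symmetric])
    moreover have "cnj (exp (\<i> * complex_of_real (\<theta> * y))) ^ k = exp (of_nat k * (- \<i> * complex_of_real (\<theta> * y)))"
      by (simp add: exp_cnj exp_of_nat_mult[symmetric])
    ultimately show ?thesis
      by (simp add: exp_add[symmetric] algebra_simps)
  qed
  show ?thesis unfolding trigp_def
  proof (rule exI[of _ "map (\<lambda>(c,j,k). (c, (real j - real k) * \<theta>)) xs"], intro allI)
    fix y
    show "P (exp (\<i> * complex_of_real (\<theta> * y))) = (\<Sum>(c,s)\<leftarrow>map (\<lambda>(c,j,k). (c, (real j - real k) * \<theta>)) xs. c * exp (\<i> * complex_of_real (s \<bullet> y)))"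
      unfolding xs by (simp only: map_map o_def case_prod_unfold e mult.assoc prod.sel)
  qed
qed

lemma trigp_compose_inner:
  assumes "trigp (h :: real \<Rightarrow> complex)"
  shows "trigp (\<lambda>x::'a::euclidean_space. h (x \<bullet> b))"
proof -
  obtain xs where xs: "\<And>y. h y = (\<Sum>(c,l)\<leftarrow>xs. c * exp (\<i> * complex_of_real (l \<bullet> y)))"
    using assms unfolding trigp_def by blast
  show ?thesis unfolding trigp_def
    by (rule exI[of _ "map (\<lambda>(c,l). (c, l *\<^sub>R b)) xs"])
       (simp add: xs o_def case_prod_unfold inner_commute)
qed



definition psi :: "real \<Rightarrow> real \<Rightarrow> real \<Rightarrow> real \<Rightarrow> real" where
  "psi p q m s = max 0 (min 1 (min (1 + m*(s-p)) (1 + m*(q-s))))"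

lemma psi_lip: "m \<ge> 0 \<Longrightarrow> \<bar>psi p q m s - psi p q m t\<bar> \<le> m * \<bar>s - t\<bar>"
proof -
  assume m: "m \<ge> 0"
  have l1: "\<bar>max 0 x - max 0 y\<bar> \<le> \<bar>x - y\<bar>" for x y :: real by (cases "x \<le> 0"; cases "y \<le> 0") (auto simp: max_def)
  have l2: "\<bar>min 1 x - min 1 y\<bar> \<le> \<bar>x - y\<bar>" for x y :: real by (cases "x \<le> 1"; cases "y \<le> 1") (auto simp: min_def)
  have l3: "\<bar>min A B - min A' B'\<bar> \<le> max \<bar>A - A'\<bar> \<bar>B - B'\<bar>" for A B A' B' :: real
    by (cases "A \<le> B"; cases "A' \<le> B'") (auto simp: min_def max_def abs_if)
  have "\<bar>max 0 (min 1 (min A B)) - max 0 (min 1 (min A' B'))\<bar> \<le> max \<bar>A - A'\<bar> \<bar>B - B'\<bar>" for A B A' B' :: real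
    by (meson l1 l2 l3 order_trans)
  from this[of "1 + m*(s-p)" "1 + m*(q-s)" "1 + m*(t-p)" "1 + m*(q-t)"]
  have "\<bar>psi p q m s - psi p q m t\<bar> \<le> max \<bar>(1 + m*(s-p)) - (1 + m*(t-p))\<bar> \<bar>(1 + m*(q-s)) - (1 + m*(q-t))\<bar>"
    unfolding psi_def .
  moreover have "(1 + m*(s-p)) - (1 + m*(t-p)) = m * (s - t)" "(1 + m*(q-s)) - (1 + m*(q-t)) = - (m * (s - t))" by (simp_all add: algebra_simps)
  ultimately show ?thesis using m by (simp add: abs_mult)
qed

lemma psi0: "A \<le> 0 \<or> B \<le> 0 \<Longrightarrow> max 0 (min 1 (min A B)) = (0::real)"
  by (auto simp: max_def min_def)

lemma psi_bounds: "0 \<le> psi p q m s" "psi p q m s \<le> 1"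
  unfolding psi_def by auto

lemma psi_lim: "(\<lambda>n. psi p q (real n + 1) y) \<longlonglongrightarrow> indicator {p..q} y"
proof (cases "y \<in> {p..q}")
  case True
  then have "psi p q (real n + 1) y = 1" for n unfolding psi_def by auto
  then show ?thesis using True by simp
next
  case False
  then have "y < p \<or> q < y" by auto
  define d where "d = (if y < p then p - y else y - q)"
  have d: "d > 0" "y + d \<le> p \<or> q \<le> y - d" using \<open>y < p \<or> q < y\<close> unfolding d_def by auto
  obtain N :: nat where N: "1 / d < real N" using reals_Archimedean2 by blast
  have "psi p q (real n + 1) y = 0" if "n \<ge> N" for n
  proof -
    have "1 / d < real n + 1" using N that by linarith
    then have "1 < (real n + 1) * d" using d(1) by (simp add: field_simps)
    have m0: "real n + 1 \<ge> 0" by simp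
    show ?thesis using d(2)
    proof
      assume "y + d \<le> p"
      then have "(real n + 1) * d \<le> (real n + 1) * (p - y)" using m0 by (intro mult_left_mono) auto
      then have "1 + (real n + 1) * (y - p) \<le> 0" using \<open>1 < (real n + 1) * d\<close> by (simp add: algebra_simps)
      then show ?thesis unfolding psi_def by (intro psi0) simp
    next
      assume "q \<le> y - d"
      then have "(real n + 1) * d \<le> (real n + 1) * (y - q)" using m0 by (intro mult_left_mono) auto
      then have "1 + (real n + 1) * (q - y) \<le> 0" using \<open>1 < (real n + 1) * d\<close> by (simp add: algebra_simps)
      then show ?thesis unfolding psi_def by (intro psi0) simp
    qed
  qed
  then have "eventually (\<lambda>n. psi p q (real n + 1) y = 0) sequentially"
    unfolding eventually_sequentially by blast
  then show ?thesis using False by (simp add: tendsto_eventually)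
qed

lemma sin_approx: "\<bar>sin x - x\<bar> \<le> x^2 / 2" for x :: real
proof -
  have "\<bar>sin x - (\<Sum>m<2. sin_coeff m * x ^ m)\<bar> \<le> inverse (fact 2) * \<bar>x\<bar> ^ 2"
    by (rule Maclaurin_sin_bound)
  moreover have "(\<Sum>m<2. sin_coeff m * x ^ m) = x"
  proof -
    have "{..<2::nat} = {0,1}" by auto
    then show ?thesis by (simp add: sin_coeff_def)
  qed
  moreover have "inverse (fact 2) * \<bar>x\<bar> ^ 2 = x^2 / 2"
    by (simp add: fact_numeral)
  ultimately show ?thesis by simp
qed



lemma approx1:
  fixes p q :: real
  shows "\<exists>T. (\<forall>n. trigp (T n :: real \<Rightarrow> complex)) \<and> (\<forall>n y. norm (T n y) \<le> 2) \<and>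
              (\<forall>y. (\<lambda>n. T n y) \<longlonglongrightarrow> complex_of_real (indicator {p..q} y))"
proof -
  define th :: "nat \<Rightarrow> real" where "th n = 1 / (real n + 1)^2" for n
  define G where "G n w = psi p q (real n + 1) (Im w / th n) * max 0 (Re w)" for n w
  have thpos: "th n > 0" for n unfolding th_def by simp
  have Gc: "continuous_on (sphere 0 1) (G n)" for n
    unfolding G_def psi_def by (intro continuous_intros) (use thpos[of n] in auto)
  have Gb: "\<bar>G n w\<bar> \<le> 1" if "w \<in> sphere 0 1" for n w
  proof -
    have "\<bar>Re w\<bar> \<le> 1" using that abs_Re_le_cmod[of w] by simp
    then have "0 \<le> max 0 (Re w)" "max 0 (Re w) \<le> 1" by auto
    then show ?thesis unfolding G_def using psi_bounds[of p q "real n + 1" "Im w / th n"]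
      by (simp add: abs_mult mult_le_one)
  qed
  have "\<forall>n. \<exists>h\<in>RR. \<forall>w\<in>sphere 0 1. \<bar>h w - G n w\<bar> < 1 / (real n + 1)"
    using SW_circ[OF Gc] by simp
  then obtain h where h: "\<And>n. h n \<in> RR" "\<And>n w. w \<in> sphere 0 1 \<Longrightarrow> \<bar>h n w - G n w\<bar> < 1 / (real n + 1)"
    by metis
  define W where "W n y = exp (\<i> * complex_of_real (th n * y))" for n y
  have Wsph: "W n y \<in> sphere 0 1" for n y unfolding W_def by simp
  have ReW: "Re (W n y) = cos (th n * y)" and ImW: "Im (W n y) = sin (th n * y)" for n y
    unfolding W_def by (simp_all add: Re_exp Im_exp)
  define T where "T n y = complex_of_real (h n (W n y))" for n y
  show ?thesis
  proof (intro exI[of _ T] conjI allI)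
    fix n
    obtain P where P: "circp P" "\<And>w. complex_of_real (h n w) = P w" using h(1)[of n] unfolding RR_def by blast
    have "T n y = P (exp (\<i> * complex_of_real (th n * y)))" for y
      unfolding T_def W_def by (rule P(2))
    then have "T n = (\<lambda>y. P (exp (\<i> * complex_of_real (th n * y))))" by (rule ext)
    then show "trigp (T n)" using circp_trig[OF P(1)] by simp
  next
    fix n y
    have "\<bar>h n (W n y)\<bar> \<le> \<bar>G n (W n y)\<bar> + 1 / (real n + 1)"
      using h(2)[OF Wsph, of n n y] by linarith
    also have "\<dots> \<le> 1 + 1" using Gb[OF Wsph] by (intro add_mono) (auto simp: field_simps)
    finally have "\<bar>h n (W n y)\<bar> \<le> 2" by simp
    then show "norm (T n y) \<le> 2" unfolding T_def norm_of_real .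
  next
    fix y
    have c1: "(\<lambda>n. max 0 (cos (th n * y))) \<longlonglongrightarrow> 1"
    proof -
      have "th \<longlonglongrightarrow> 0"
      proof -
        have "th n \<le> 1 / (real n + 1)" for n
        proof -
          have "real n + 1 \<le> (real n + 1)^2"
            using mult_right_mono[of 1 "real n + 1" "real n + 1"] by (simp add: power2_eq_square)
          then show ?thesis unfolding th_def by (intro divide_left_mono) auto
        qed
        note th1 = this
        have lim1: "(\<lambda>n. 1 / (real n + 1)) \<longlonglongrightarrow> 0"
          using LIMSEQ_inverse_real_of_nat by (simp add: inverse_eq_divide add.commute)
        have ev: "\<forall>\<^sub>F n in sequentially. norm (th n) \<le> 1 / (real n + 1)"
        proof (intro always_eventually allI)
          fix n show "norm (th n) \<le> 1 / (real n + 1)" using th1[of n] thpos[of n] by simp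
        qed
        show ?thesis using Lim_null_comparison[OF ev lim1] .
      qed
      then have "(\<lambda>n. max 0 (cos (th n * y))) \<longlonglongrightarrow> max 0 (cos (0 * y))"
        by (intro tendsto_intros)
      then show ?thesis by simp
    qed
    have c2: "(\<lambda>n. psi p q (real n + 1) (sin (th n * y) / th n) - psi p q (real n + 1) y) \<longlonglongrightarrow> 0"
    proof (rule Lim_null_comparison)
      show "\<forall>\<^sub>F n in sequentially. norm (psi p q (real n + 1) (sin (th n * y) / th n) - psi p q (real n + 1) y) \<le> y^2 / (2 * (real n + 1))"
      proof (intro always_eventually allI)
        fix n
        have "norm (psi p q (real n + 1) (sin (th n * y) / th n) - psi p q (real n + 1) y)
            \<le> (real n + 1) * \<bar>sin (th n * y) / th n - y\<bar>"
          using psi_lip[of "real n + 1"] by simp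
        also have "\<bar>sin (th n * y) / th n - y\<bar> = \<bar>sin (th n * y) - th n * y\<bar> / th n"
          using thpos[of n] by (simp add: field_simps)
        also have "\<dots> \<le> (th n * y)^2 / 2 / th n"
          using sin_approx[of "th n * y"] thpos[of n] by (intro divide_right_mono) auto
        also have "(real n + 1) * ((th n * y)^2 / 2 / th n) = y^2 / (2 * (real n + 1))"
        proof -
          have a: "(th n * y)^2 / 2 / th n = th n * y^2 / 2" using thpos[of n] by (simp add: power_mult_distrib power2_eq_square)
          have b: "(real n + 1) * (1 / (real n + 1)^2 * y^2 / 2) = y^2 / (2 * (real n + 1))"
            by (simp add: power2_eq_square)
          show ?thesis unfolding a using b unfolding th_def .
        qed
        finally show "norm (psi p q (real n + 1) (sin (th n * y) / th n) - psi p q (real n + 1) y) \<le> y^2 / (2 * (real n + 1))"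
          by (simp add: mult_left_mono)
      qed
      have "(\<lambda>n. (y^2/2) * (1 / (real n + 1))) \<longlonglongrightarrow> (y^2/2) * 0"
        using LIMSEQ_inverse_real_of_nat by (intro tendsto_intros) (simp add: inverse_eq_divide add.commute)
      then show "(\<lambda>n. y^2 / (2 * (real n + 1))) \<longlonglongrightarrow> 0" by simp
    qed
    have c3: "(\<lambda>n. psi p q (real n + 1) (sin (th n * y) / th n)) \<longlonglongrightarrow> indicator {p..q} y"
      using tendsto_add[OF c2 psi_lim[of p q y]] by simp
    have c4: "(\<lambda>n. G n (W n y)) \<longlonglongrightarrow> indicator {p..q} y"
      unfolding G_def ReW ImW using tendsto_mult[OF c3 c1] by simp
    have c5: "(\<lambda>n. h n (W n y) - G n (W n y)) \<longlonglongrightarrow> 0"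
    proof (rule Lim_null_comparison)
      show "\<forall>\<^sub>F n in sequentially. norm (h n (W n y) - G n (W n y)) \<le> 1 / (real n + 1)"
        using h(2)[OF Wsph] by (intro always_eventually allI) (simp add: less_imp_le)
      show "(\<lambda>n. 1 / (real n + 1)) \<longlonglongrightarrow> 0"
        using LIMSEQ_inverse_real_of_nat by (simp add: inverse_eq_divide add.commute)
    qed
    have "(\<lambda>n. h n (W n y)) \<longlonglongrightarrow> indicator {p..q} y"
      using tendsto_add[OF c5 c4] by simp
    then show "(\<lambda>n. T n y) \<longlonglongrightarrow> complex_of_real (indicator {p..q} y)"
      unfolding T_def by (intro tendsto_intros)
  qed
qed



lemma trigp_cont: "trigp g \<Longrightarrow> continuous_on S g"
proof -
  assume "trigp g"
  then obtain xs where xs: "\<And>x. g x = (\<Sum>(c,s)\<leftarrow>xs. c * exp (\<i> * complex_of_real (s \<bullet> x)))"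
    unfolding trigp_def by blast
  have "continuous_on S (\<lambda>x. (\<Sum>(c,s)\<leftarrow>ys. c * exp (\<i> * complex_of_real (s \<bullet> x))))" for ys
    by (induction ys) (auto intro!: continuous_intros simp: case_prod_unfold)
  then show ?thesis by (simp add: xs[abs_def])
qed

lemma trigp_meas: "trigp g \<Longrightarrow> g \<in> borel_measurable borel"
  using trigp_cont[of g UNIV] by (simp add: borel_measurable_continuous_onI)

lemma box_zero:
  fixes f :: "'a::euclidean_space \<Rightarrow> complex"
  assumes f: "integrable lborel f" and F: "\<And>s. (LINT x|lborel. f x * exp (\<i> * complex_of_real (s \<bullet> x))) = 0"
  shows "(LINT x|lborel. indicator (cbox u v) x *\<^sub>R f x) = 0"
proof -
  have ex: "\<forall>b. \<exists>T. (\<forall>n. trigp (T n :: real \<Rightarrow> complex)) \<and> (\<forall>n y. norm (T n y) \<le> 2) \<and>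
              (\<forall>y. (\<lambda>n. T n y) \<longlonglongrightarrow> complex_of_real (indicator {u\<bullet>b..v\<bullet>b} y))"
    using approx1 by blast
  obtain TT where TT0: "\<forall>b. (\<forall>n. trigp (TT b n :: real \<Rightarrow> complex)) \<and> (\<forall>n y. norm (TT b n y) \<le> 2) \<and>
              (\<forall>y. (\<lambda>n. TT b n y) \<longlonglongrightarrow> complex_of_real (indicator {u\<bullet>b..v\<bullet>b} y))"
    using choice[OF ex] by blast
  have TT: "\<And>b n. trigp (TT b n :: real \<Rightarrow> complex)" "\<And>b n y. norm (TT b n y) \<le> 2"
     "\<And>b y. (\<lambda>n. TT b n y) \<longlonglongrightarrow> complex_of_real (indicator {u\<bullet>b..v\<bullet>b} y)"
    using TT0 by blast+
  define S where "S n x = (\<Prod>b\<in>Basis. TT b n (x \<bullet> b))" for n x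
  have St: "trigp (S n)" for n
    unfolding S_def by (intro trigp_prod trigp_compose_inner TT) auto
  have [measurable]: "f \<in> borel_measurable lborel" using f by (rule borel_measurable_integrable)
  have Sm[measurable]: "S n \<in> borel_measurable lborel" for n
    using trigp_meas[OF St[of n]] by simp
  have ind: "indicator (cbox u v) x = (\<Prod>b\<in>Basis. indicator {u\<bullet>b..v\<bullet>b} (x \<bullet> b) :: real)" for x
    by (auto simp: cbox_def indicator_def prod.neutral)
  have lim: "(\<lambda>n. f x * S n x) \<longlonglongrightarrow> indicator (cbox u v) x *\<^sub>R f x" for x
  proof -
    have "(\<lambda>n. S n x) \<longlonglongrightarrow> (\<Prod>b\<in>Basis. complex_of_real (indicator {u\<bullet>b..v\<bullet>b} (x \<bullet> b)))"
      unfolding S_def by (intro tendsto_prod TT)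
    then have "(\<lambda>n. f x * S n x) \<longlonglongrightarrow> f x * (\<Prod>b\<in>Basis. complex_of_real (indicator {u\<bullet>b..v\<bullet>b} (x \<bullet> b)))"
      by (intro tendsto_intros)
    moreover have "indicator (cbox u v) x *\<^sub>R f x = f x * (\<Prod>b\<in>Basis. complex_of_real (indicator {u\<bullet>b..v\<bullet>b} (x \<bullet> b)))"
      unfolding ind scaleR_conv_of_real of_real_prod by (rule mult.commute)
    ultimately show ?thesis by simp
  qed
  have bnd: "norm (f x * S n x) \<le> 2 ^ DIM('a) * norm (f x)" for n x
  proof -
    have "norm (S n x) \<le> (\<Prod>b\<in>(Basis::'a set). 2)"
      unfolding S_def prod_norm[symmetric] by (intro prod_mono) (auto simp: TT(2))
    then have "norm (S n x) \<le> 2 ^ DIM('a)" by simp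
    then show ?thesis by (simp add: norm_mult mult.commute mult_left_mono)
  qed
  have "(\<lambda>n. LINT x|lborel. f x * S n x) \<longlonglongrightarrow> (LINT x|lborel. indicator (cbox u v) x *\<^sub>R f x)"
  proof (rule integral_dominated_convergence[where w="\<lambda>x. 2 ^ DIM('a) * norm (f x)"])
    show "(\<lambda>x. indicator (cbox u v) x *\<^sub>R f x) \<in> borel_measurable lborel" by measurable
    show "(\<lambda>x. f x * S i x) \<in> borel_measurable lborel" for i by measurable
    show "integrable lborel (\<lambda>x. 2 ^ DIM('a) * norm (f x))" using f by simp
    show "AE x in lborel. (\<lambda>i. f x * S i x) \<longlonglongrightarrow> indicator (cbox u v) x *\<^sub>R f x"
      using lim by simp
    show "AE x in lborel. norm (f x * S i x) \<le> 2 ^ DIM('a) * norm (f x)" for i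
      using bnd by simp
  qed
  moreover have "(LINT x|lborel. f x * S n x) = 0" for n
    by (rule trigp_integral[OF f F St])
  ultimately have "(\<lambda>n. 0::complex) \<longlonglongrightarrow> (LINT x|lborel. indicator (cbox u v) x *\<^sub>R f x)" by simp
  then show ?thesis using LIMSEQ_unique[OF tendsto_const] by metis
qed

lemma fourier_unique:
  fixes f :: "'a::euclidean_space \<Rightarrow> complex"
  assumes f: "integrable lborel f" and F: "\<And>s. (LINT x|lborel. f x * exp (\<i> * complex_of_real (s \<bullet> x))) = 0"
  shows "AE x in lborel. f x = 0"
proof -
  have si: "set_integrable lborel (cbox u v) f" for u v
    unfolding set_integrable_def by (rule integrable_mult_indicator) (use f in auto)
  have I0: "integral (cbox u v) f = 0" for u v
    using set_borel_integral_eq_integral(2)[OF si] box_zero[OF f F, of u v]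
    by (simp add: set_lebesgue_integral_def)
  have "f integrable_on cbox u v" for u v
    using set_borel_integral_eq_integral(1)[OF si] .
  then obtain N where N: "negligible N"
    "\<And>x e. \<lbrakk>x \<notin> N; 0 < e\<rbrakk> \<Longrightarrow> \<exists>d>0. \<forall>h. 0 < h \<and> h < d \<longrightarrow>
         norm(integral (cbox x (x + h *\<^sub>R One)) f /\<^sub>R h ^ DIM('a) - f x) < e"
    using integrable_ccontinuous_explicit by blast
  have "f x = 0" if xN: "x \<notin> N" for x
  proof (rule ccontr)
    assume "f x \<noteq> 0"
    then obtain d where d: "d > 0" "\<forall>h. 0 < h \<and> h < d \<longrightarrow> norm (integral (cbox x (x + h *\<^sub>R One)) f /\<^sub>R h ^ DIM('a) - f x) < norm (f x)"
      using N(2)[OF xN, of "norm (f x)"] \<open>f x \<noteq> 0\<close> by auto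
    from d(2)[rule_format, of "d/2"] d(1) show False by (simp add: I0)
  qed
  moreover have "N \<in> null_sets lebesgue" using N(1) negligible_iff_null_sets by blast
  ultimately have "AE x in lebesgue. f x = 0"
    by (auto intro: AE_I'[of N])
  then show ?thesis by (simp add: AE_completion_iff)
qed



lemma integrable_exp_abs_real: "a > 0 \<Longrightarrow> integrable lborel (\<lambda>t::real. exp (- a * \<bar>t\<bar>))"
proof -
  assume a: "a > 0"
  define g where "g t = indicator {0..} t * exp (- a * t)" for t :: real
  have "(\<lambda>x. exp (- a * x)) integrable_on {0::real..}"
    using integrable_on_exp_minus_to_infinity[OF a] .
  then have "(\<lambda>x. exp (- a * x)) absolutely_integrable_on {0::real..}"
    by (rule nonnegative_absolutely_integrable_1) simp
  then have "integrable lebesgue g"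
    unfolding set_integrable_def g_def by (simp add: mult.commute)
  moreover have gm: "g \<in> borel_measurable lborel" unfolding g_def by measurable
  ultimately have gi: "integrable lborel g"
    using integrable_completion by (metis measurable_lborel1 measurable_lborel2 gm)
  have gi2: "integrable lborel (\<lambda>t. g (0 + (-1) * t))"
    by (rule lborel_integrable_real_affine[OF gi]) simp
  have "integrable lborel (\<lambda>t. g t + g (0 + (-1) * t))" using gi gi2 by simp
  then show ?thesis
  proof (rule Bochner_Integration.integrable_bound)
    show "(\<lambda>t::real. exp (- a * \<bar>t\<bar>)) \<in> borel_measurable lborel" by measurable
    show "AE x in lborel. norm (exp (- a * \<bar>x\<bar>)) \<le> norm (g x + g (0 + - 1 * x))"
      by (intro AE_I2) (auto simp: g_def indicator_def)
  qed
qed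

lemma integrable_exp_norm:
  assumes "d > 0"
  shows "integrable lborel (\<lambda>z::'a::euclidean_space. exp (- d * norm z))"
proof -
  define D where "D = real DIM('a)"
  have D: "D > 0" unfolding D_def by simp
  define a where "a = d / D"
  have a: "a > 0" unfolding a_def using assms D by simp
  have nn: "(\<integral>\<^sup>+ t. ennreal (exp (- a * \<bar>t\<bar>)) \<partial>lborel) < \<infinity>"
    using integrableD(2)[OF integrable_exp_abs_real[OF a]] by (simp add: top.not_eq_extremum)
  define P where "P z = (\<Prod>b\<in>(Basis::'a set). exp (- a * \<bar>z \<bullet> b\<bar>))" for z
  have "(\<integral>\<^sup>+ z. ennreal (P z) \<partial>lborel) = (\<integral>\<^sup>+ z. (\<Prod>b\<in>Basis. ennreal (exp (- a * \<bar>(z::'a) \<bullet> b\<bar>))) \<partial>lborel)"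
    unfolding P_def by (rule nn_integral_cong) (simp add: prod_ennreal)
  also have "\<dots> = (\<Prod>b\<in>(Basis::'a set). (\<integral>\<^sup>+ t. ennreal (exp (- a * \<bar>t\<bar>)) \<partial>lborel))"
    by (rule nn_integral_lborel_prod[where f="\<lambda>b t. ennreal (exp (- a * \<bar>t\<bar>))"]) auto
  also have "\<dots> < \<infinity>" using nn by (simp add: power_less_top_ennreal)
  finally have "(\<integral>\<^sup>+ z. ennreal (P z) \<partial>lborel) < \<infinity>" .
  moreover have Pm: "P \<in> borel_measurable lborel" unfolding P_def by measurable
  moreover have "0 \<le> P z" for z unfolding P_def by (simp add: prod_nonneg)
  ultimately have Pi: "integrable lborel P"
    by (intro integrableI_nonneg) (auto simp: less_top)
  show ?thesis
  proof (rule Bochner_Integration.integrable_bound[OF Pi])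
    show "(\<lambda>z::'a. exp (- d * norm z)) \<in> borel_measurable lborel" by measurable
    show "AE z in lborel. norm (exp (- d * norm z)) \<le> norm (P z)"
    proof (intro AE_I2)
      fix z :: 'a
      have "(\<Sum>b\<in>(Basis::'a set). \<bar>z \<bullet> b\<bar>) \<le> (\<Sum>b\<in>(Basis::'a set). norm z)"
        by (intro sum_mono Basis_le_norm)
      then have s: "(\<Sum>b\<in>(Basis::'a set). \<bar>z \<bullet> b\<bar>) \<le> D * norm z" unfolding D_def by simp
      have "P z = exp (- a * (\<Sum>b\<in>(Basis::'a set). \<bar>z \<bullet> b\<bar>))"
        unfolding P_def by (simp add: exp_sum sum_distrib_left)
      moreover have "- d * norm z \<le> - a * (\<Sum>b\<in>(Basis::'a set). \<bar>z \<bullet> b\<bar>)"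
      proof -
        have "a * (\<Sum>b\<in>(Basis::'a set). \<bar>z \<bullet> b\<bar>) \<le> a * (D * norm z)"
          using s a by (intro mult_left_mono) auto
        also have "a * (D * norm z) = d * norm z" unfolding a_def using D by simp
        finally show ?thesis by simp
      qed
      ultimately show "norm (exp (- d * norm z)) \<le> norm (P z)" by simp
    qed
  qed
qed

lemma poly_exp_bound:
  assumes "d > 0"
  shows "\<exists>K>0. \<forall>r\<ge>0. (1 + r) ^ k \<le> K * exp (d * (r::real))"
proof (cases "k = 0")
  case True then show ?thesis using assms by (intro exI[of _ 1]) auto
next
  case False
  define M where "M = max 1 (real k / d)"
  have M: "M \<ge> 1" unfolding M_def by simp
  show ?thesis
  proof (intro exI[of _ "M ^ k"] conjI allI impI)
    show "M ^ k > 0" using M by simp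
    fix r :: real assume r: "r \<ge> 0"
    have "1 + r \<le> M * (1 + d * r / real k)"
    proof -
      have "1 \<le> M" by (rule M)
      moreover have "r \<le> M * (d * r / real k)"
      proof -
        have "real k / d \<le> M" unfolding M_def by simp
        then have "real k / d * (d * r / real k) \<le> M * (d * r / real k)"
          using r assms by (intro mult_right_mono) auto
        moreover have "real k / d * (d * r / real k) = r" using assms False by simp
        ultimately show ?thesis by simp
      qed
      ultimately show ?thesis by (simp add: distrib_left)
    qed
    then have "(1 + r) ^ k \<le> (M * (1 + d * r / real k)) ^ k"
      using r by (intro power_mono) auto
    also have "\<dots> = M ^ k * (1 + (d * r) / of_nat k) ^ k" by (simp add: power_mult_distrib)
    also have "\<dots> \<le> M ^ k * exp (d * r)"
      using M False r assms by (intro mult_left_mono exp_ge_one_plus_x_over_n_power_n) (auto intro: order_trans[of _ 0])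
    finally show "(1 + r) ^ k \<le> M ^ k * exp (d * r)" .
  qed
qed



inductive pol :: "(complex ^ 'd \<Rightarrow> complex) \<Rightarrow> bool" where
  mono: "pol (\<lambda>z. cmonom \<alpha> z * cnj (cmonom \<beta> z))"
| add: "pol p \<Longrightarrow> pol q \<Longrightarrow> pol (\<lambda>z. p z + q z)"
| smult: "pol p \<Longrightarrow> pol (\<lambda>z. c * p z)"

lemma pol_zero: "pol (\<lambda>z. 0)"
  using pol.smult[OF pol.mono, of 0] by simp

lemma pol_one: "pol (\<lambda>z. 1)"
  using pol.mono[of "\<lambda>_. 0" "\<lambda>_. 0"] by (simp add: cmonom_def)

lemma pol_sum: "finite I \<Longrightarrow> (\<And>i. i \<in> I \<Longrightarrow> pol (g i)) \<Longrightarrow> pol (\<lambda>z. \<Sum>i\<in>I. g i z)"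
  by (induction I rule: finite_induct) (auto intro: pol_zero pol.add)

lemma cmonom_Suc: "cmonom (\<alpha>(j := Suc (\<alpha> j))) z = z $ j * cmonom \<alpha> z"
proof -
  have "cmonom (\<alpha>(j := Suc (\<alpha> j))) z = (\<Prod>i\<in>UNIV. (z $ i) ^ \<alpha> i * (if i = j then z $ i else 1))"
    unfolding cmonom_def by (intro prod.cong) auto
  also have "\<dots> = cmonom \<alpha> z * z $ j"
    unfolding cmonom_def prod.distrib by (simp add: prod.delta)
  finally show ?thesis by simp
qed

lemma pol_mult_coord: "pol p \<Longrightarrow> pol (\<lambda>z. z $ j * p z)"
proof (induction rule: pol.induct)
  case (mono \<alpha> \<beta>)
  show ?case using pol.mono[of "\<alpha>(j := Suc (\<alpha> j))" \<beta>] by (simp add: cmonom_Suc mult.assoc)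
next
  case (add p q) then show ?case using pol.add by (simp add: distrib_left)
next
  case (smult p c) then show ?case using pol.smult[of _ c] by (simp add: mult.left_commute)
qed

lemma pol_mult_cnj_coord: "pol p \<Longrightarrow> pol (\<lambda>z. cnj (z $ j) * p z)"
proof (induction rule: pol.induct)
  case (mono \<alpha> \<beta>)
  show ?case using pol.mono[of \<alpha> "\<beta>(j := Suc (\<beta> j))"] by (simp add: cmonom_Suc mult.commute mult.left_commute)
next
  case (add p q) then show ?case using pol.add by (simp add: distrib_left)
next
  case (smult p c) then show ?case using pol.smult[of _ c] by (simp add: mult.left_commute)
qed

lemma of_real_inner_complex: "complex_of_real (x \<bullet> y) = (cnj x * y + x * cnj y) / 2"
  by (simp add: complex_eq_iff inner_complex_def)

lemma pol_mult_inner: "pol p \<Longrightarrow> pol (\<lambda>z. complex_of_real (s \<bullet> z) * p z)"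
proof -
  assume p: "pol p"
  have "complex_of_real (s \<bullet> z) * p z = (\<Sum>i\<in>UNIV. (cnj (s $ i) / 2) * (z $ i * p z) + (s $ i / 2) * (cnj (z $ i) * p z))" for z
    unfolding inner_vec_def of_real_sum sum_distrib_right of_real_inner_complex
    by (intro sum.cong) (auto simp: algebra_simps)
  moreover have "pol (\<lambda>z. \<Sum>i\<in>UNIV. (cnj (s $ i) / 2) * (z $ i * p z) + (s $ i / 2) * (cnj (z $ i) * p z))"
    by (intro pol_sum pol.add pol.smult pol_mult_coord pol_mult_cnj_coord p) auto
  ultimately show ?thesis by simp
qed

lemma pol_mult_inner_pow: "pol p \<Longrightarrow> pol (\<lambda>z. complex_of_real (s \<bullet> z) ^ n * p z)"
proof (induction n)
  case 0 then show ?case by simp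
next
  case (Suc n)
  then have "pol (\<lambda>z. complex_of_real (s \<bullet> z) * (complex_of_real (s \<bullet> z) ^ n * p z))"
    by (intro pol_mult_inner) auto
  then show ?case by (simp add: mult.assoc)
qed

lemma norm_cmonom: "norm (cmonom \<alpha> z) \<le> (1 + norm z) ^ (\<Sum>i\<in>UNIV. \<alpha> i)"
proof -
  have "norm (cmonom \<alpha> z) = (\<Prod>i\<in>UNIV. norm (z $ i) ^ \<alpha> i)"
    unfolding cmonom_def by (simp add: prod_norm[symmetric] norm_power)
  also have "\<dots> \<le> (\<Prod>i\<in>UNIV. (1 + norm z) ^ \<alpha> i)"
  proof (intro prod_mono conjI power_mono)
    fix i
    have "norm (z $ i) \<le> norm z" by (rule Finite_Cartesian_Product.norm_nth_le)
    then show "norm (z $ i) \<le> 1 + norm z" by linarith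
  qed auto
  also have "\<dots> = (1 + norm z) ^ (\<Sum>i\<in>UNIV. \<alpha> i)" by (simp add: power_sum)
  finally show ?thesis .
qed

lemma pol_bound: "pol p \<Longrightarrow> \<exists>K m. \<forall>z. norm (p z) \<le> K * (1 + norm z) ^ m"
proof (induction rule: pol.induct)
  case (mono \<alpha> \<beta>)
  show ?case
  proof (intro exI allI)
    fix z :: "complex ^ 'a"
    have "norm (cmonom \<alpha> z * cnj (cmonom \<beta> z)) \<le> (1 + norm z) ^ (\<Sum>i\<in>UNIV. \<alpha> i) * (1 + norm z) ^ (\<Sum>i\<in>UNIV. \<beta> i)"
      unfolding norm_mult complex_mod_cnj by (intro mult_mono norm_cmonom) auto
    then show "norm (cmonom \<alpha> z * cnj (cmonom \<beta> z)) \<le> 1 * (1 + norm z) ^ ((\<Sum>i\<in>UNIV. \<alpha> i) + (\<Sum>i\<in>UNIV. \<beta> i))"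
      by (simp add: power_add)
  qed
next
  case (add p q)
  then obtain K1 m1 K2 m2 where b: "\<And>z. norm (p z) \<le> K1 * (1 + norm z) ^ m1" "\<And>z. norm (q z) \<le> K2 * (1 + norm z) ^ m2"
    by blast
  show ?case
  proof (intro exI allI)
    fix z :: "complex ^ 'a"
    have "0 \<le> K1 * (1 + norm z) ^ m1" using b(1)[of z] norm_ge_zero[of "p z"] by linarith
    moreover have "0 < (1 + norm z) ^ m1" by (simp add: add_pos_nonneg)
    ultimately have K1: "K1 \<ge> 0" by (simp add: zero_le_mult_iff)
    have "0 \<le> K2 * (1 + norm z) ^ m2" using b(2)[of z] norm_ge_zero[of "q z"] by linarith
    moreover have "0 < (1 + norm z) ^ m2" by (simp add: add_pos_nonneg)
    ultimately have K2: "K2 \<ge> 0" by (simp add: zero_le_mult_iff)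
    have pm: "(1 + norm z) ^ m \<le> (1 + norm z) ^ max m1 m2" if "m \<le> max m1 m2" for m
      using that by (intro power_increasing) auto
    have "norm (p z + q z) \<le> K1 * (1 + norm z) ^ m1 + K2 * (1 + norm z) ^ m2"
      using norm_triangle_ineq[of "p z" "q z"] b[of z] by linarith
    also have "\<dots> \<le> K1 * (1 + norm z) ^ max m1 m2 + K2 * (1 + norm z) ^ max m1 m2"
      using K1 K2 pm by (intro add_mono mult_left_mono) auto
    finally show "norm (p z + q z) \<le> (K1 + K2) * (1 + norm z) ^ max m1 m2"
      by (simp add: distrib_right)
  qed
next
  case (smult p c)
  then obtain K m where b: "\<And>z. norm (p z) \<le> K * (1 + norm z) ^ m" by blast
  show ?case
  proof (intro exI allI)
    fix z :: "complex ^ 'a"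
    show "norm (c * p z) \<le> (norm c * K) * (1 + norm z) ^ m"
    proof -
      have "norm (c * p z) = norm c * norm (p z)" by (rule norm_mult)
      also have "\<dots> \<le> norm c * (K * (1 + norm z) ^ m)" using b[of z] by (intro mult_left_mono) auto
      finally show ?thesis by (simp add: mult.assoc)
    qed
  qed
qed

lemma pol_cont: "pol p \<Longrightarrow> continuous_on S p"
proof (induction rule: pol.induct)
  case (mono \<alpha> \<beta>)
  show ?case unfolding cmonom_def by (intro continuous_intros)
qed (auto intro: continuous_intros)

lemma pol_meas: "pol p \<Longrightarrow> p \<in> borel_measurable borel"
  using pol_cont[of p UNIV] by (simp add: borel_measurable_continuous_onI)



lemma pol_dom:
  fixes f :: "complex ^ 'd \<Rightarrow> complex"
  assumes H: "\<And>k. integrable lborel (\<lambda>z. norm (f z) * exp (c' * norm z) * (1 + norm z) ^ k)"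
    and q: "pol q"
  shows "\<exists>w. integrable lborel w \<and> (\<forall>z h. norm h \<le> exp (c' * norm z) \<longrightarrow> norm (f z * q z * h) \<le> w z)"
proof -
  obtain K m where b: "\<And>z. norm (q z) \<le> K * (1 + norm z) ^ m" using pol_bound[OF q] by blast
  show ?thesis
  proof (intro exI conjI allI impI)
    show "integrable lborel (\<lambda>z. \<bar>K\<bar> * (norm (f z) * exp (c' * norm z) * (1 + norm z) ^ m))"
      using H[of m] by simp
    fix z :: "complex ^ 'd" and h :: complex
    assume h: "norm h \<le> exp (c' * norm z)"
    have "norm (q z) \<le> \<bar>K\<bar> * (1 + norm z) ^ m"
      using b[of z] by (smt (verit) mult_right_mono abs_ge_self zero_le_power norm_ge_zero)
    then have "norm (f z * q z * h) \<le> norm (f z) * (\<bar>K\<bar> * (1 + norm z) ^ m) * exp (c' * norm z)"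
      unfolding norm_mult using h by (intro mult_mono) (auto intro: mult_left_mono)
    then show "norm (f z * q z * h) \<le> \<bar>K\<bar> * (norm (f z) * exp (c' * norm z) * (1 + norm z) ^ m)"
      by (simp add: algebra_simps)
  qed
qed

lemma pol_integrable:
  fixes f :: "complex ^ 'd \<Rightarrow> complex"
  assumes H: "\<And>k. integrable lborel (\<lambda>z. norm (f z) * exp (c' * norm z) * (1 + norm z) ^ k)"
    and fm: "f \<in> borel_measurable lborel"
    and q: "pol q" and hm: "h \<in> borel_measurable lborel" and hb: "\<And>z. norm (h z) \<le> exp (c' * norm z)"
  shows "integrable lborel (\<lambda>z. f z * q z * h z)"
proof -
  obtain w where w: "integrable lborel w" "\<And>z h. norm h \<le> exp (c' * norm z) \<Longrightarrow> norm (f z * q z * h) \<le> w z"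
    using pol_dom[OF H q] by blast
  have [measurable]: "q \<in> borel_measurable lborel" using pol_meas[OF q] by simp
  note [measurable] = fm hm
  show ?thesis
  proof (rule Bochner_Integration.integrable_bound[OF w(1)])
    show "(\<lambda>z. f z * q z * h z) \<in> borel_measurable lborel" by measurable
    show "AE z in lborel. norm (f z * q z * h z) \<le> norm (w z)"
    proof (intro AE_I2)
      fix z show "norm (f z * q z * h z) \<le> norm (w z)" using w(2)[OF hb[of z]] by simp
    qed
  qed
qed

lemma partial_exp_bound:
  "norm (\<Sum>n<N. (\<i> * complex_of_real x) ^ n /\<^sub>R fact n) \<le> exp \<bar>x\<bar>"
proof -
  have "norm (\<Sum>n<N. (\<i> * complex_of_real x) ^ n /\<^sub>R fact n) \<le> (\<Sum>n<N. norm ((\<i> * complex_of_real x) ^ n /\<^sub>R fact n))"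
    by (rule norm_sum)
  also have "\<dots> = (\<Sum>n<N. \<bar>x\<bar> ^ n /\<^sub>R fact n)"
    by (simp add: norm_power norm_mult)
  also have "\<dots> \<le> (\<Sum>n. \<bar>x\<bar> ^ n /\<^sub>R fact n)"
    by (rule sum_le_suminf) (use exp_converges[of "\<bar>x\<bar>"] in \<open>auto simp: sums_iff\<close>)
  also have "\<dots> = exp \<bar>x\<bar>" using exp_converges[of "\<bar>x\<bar>"] by (simp add: sums_iff)
  finally show ?thesis .
qed

lemma Z_step:
  fixes f :: "complex ^ 'd \<Rightarrow> complex"
  assumes H: "\<And>k. integrable lborel (\<lambda>z. norm (f z) * exp (c' * norm z) * (1 + norm z) ^ k)"
    and fm: "f \<in> borel_measurable lborel"
    and Zs: "\<And>q. pol q \<Longrightarrow> (LINT z|lborel. f z * q z * exp (\<i> * complex_of_real (s \<bullet> z))) = 0"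
    and t: "norm t \<le> c'"
    and q: "pol q"
  shows "(LINT z|lborel. f z * q z * exp (\<i> * complex_of_real ((s + t) \<bullet> z))) = 0"
proof -
  have c0: "c' \<ge> 0" using t norm_ge_zero[of t] by linarith
  define E where "E N z = (\<Sum>n<N. (\<i> * complex_of_real (t \<bullet> z)) ^ n /\<^sub>R fact n)" for N z
  define g where "g N z = f z * q z * (exp (\<i> * complex_of_real (s \<bullet> z)) * E N z)" for N z
  obtain w where w: "integrable lborel w" "\<And>z h. norm h \<le> exp (c' * norm z) \<Longrightarrow> norm (f z * q z * h) \<le> w z"
    using pol_dom[OF H q] by blast
  have [measurable]: "q \<in> borel_measurable lborel" using pol_meas[OF q] by simp
  note [measurable] = fm
  have Em[measurable]: "E N \<in> borel_measurable lborel" for N unfolding E_def by measurable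
  have hb: "norm (exp (\<i> * complex_of_real (s \<bullet> z)) * E N z) \<le> exp (c' * norm z)" for N z
  proof -
    have "norm (E N z) \<le> exp \<bar>t \<bullet> z\<bar>" unfolding E_def by (rule partial_exp_bound)
    also have "\<dots> \<le> exp (c' * norm z)"
    proof -
      have "\<bar>t \<bullet> z\<bar> \<le> norm t * norm z" by (rule Cauchy_Schwarz_ineq2)
      also have "\<dots> \<le> c' * norm z" using t by (intro mult_right_mono) auto
      finally show ?thesis by simp
    qed
    finally show ?thesis by (simp add: norm_mult)
  qed
  have lim: "(\<lambda>N. g N z) \<longlonglongrightarrow> f z * q z * exp (\<i> * complex_of_real ((s + t) \<bullet> z))" for z
  proof -
    have "(\<lambda>N. E N z) \<longlonglongrightarrow> exp (\<i> * complex_of_real (t \<bullet> z))"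
      unfolding E_def using exp_converges[of "\<i> * complex_of_real (t \<bullet> z)"] by (simp add: sums_def)
    then have "(\<lambda>N. g N z) \<longlonglongrightarrow> f z * q z * (exp (\<i> * complex_of_real (s \<bullet> z)) * exp (\<i> * complex_of_real (t \<bullet> z)))"
      unfolding g_def by (intro tendsto_intros)
    also have "exp (\<i> * complex_of_real (s \<bullet> z)) * exp (\<i> * complex_of_real (t \<bullet> z)) = exp (\<i> * complex_of_real ((s + t) \<bullet> z))"
      by (simp add: inner_add_left exp_add[symmetric] distrib_left)
    finally show ?thesis .
  qed
  have int0: "(LINT z|lborel. g N z) = 0" for N
  proof -
    define u where "u n z = f z * (complex_of_real (t \<bullet> z) ^ n * q z) * exp (\<i> * complex_of_real (s \<bullet> z))" for n z
    have ui: "integrable lborel (u n)" for n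
      unfolding u_def
      by (rule pol_integrable[OF H fm pol_mult_inner_pow[OF q]]) (measurable, simp add: c0)
    have u0: "(LINT z|lborel. u n z) = 0" for n
      unfolding u_def by (rule Zs[OF pol_mult_inner_pow[OF q]])
    have "g N z = (\<Sum>n<N. (\<i> ^ n /\<^sub>R fact n) * u n z)" for z
      unfolding g_def E_def u_def
      by (simp add: sum_distrib_left power_mult_distrib scaleR_conv_of_real algebra_simps)
    then have "(LINT z|lborel. g N z) = (LINT z|lborel. (\<Sum>n<N. (\<i> ^ n /\<^sub>R fact n) * u n z))" by simp
    also have "\<dots> = (\<Sum>n<N. LINT z|lborel. (\<i> ^ n /\<^sub>R fact n) * u n z)"
      by (rule Bochner_Integration.integral_sum) (use ui in auto)
    also have "\<dots> = 0" using u0 by simp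
    finally show ?thesis .
  qed
  have "(\<lambda>N. LINT z|lborel. g N z) \<longlonglongrightarrow> (LINT z|lborel. f z * q z * exp (\<i> * complex_of_real ((s + t) \<bullet> z)))"
  proof (rule integral_dominated_convergence[where w=w])
    show "(\<lambda>z. f z * q z * exp (\<i> * complex_of_real ((s + t) \<bullet> z))) \<in> borel_measurable lborel" by measurable
    show "(\<lambda>z. g i z) \<in> borel_measurable lborel" for i unfolding g_def by measurable
    show "integrable lborel w" by (rule w(1))
    show "AE z in lborel. (\<lambda>i. g i z) \<longlonglongrightarrow> f z * q z * exp (\<i> * complex_of_real ((s + t) \<bullet> z))"
      using lim by simp
    show "AE z in lborel. norm (g i z) \<le> w z" for i
      unfolding g_def using w(2)[OF hb] by simp
  qed
  then have "(\<lambda>N. 0::complex) \<longlonglongrightarrow> (LINT z|lborel. f z * q z * exp (\<i> * complex_of_real ((s + t) \<bullet> z)))"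
    using int0 by simp
  then show ?thesis using LIMSEQ_unique[OF tendsto_const] by metis
qed



lemma Z_all:
  fixes f :: "complex ^ 'd \<Rightarrow> complex"
  assumes H: "\<And>k. integrable lborel (\<lambda>z. norm (f z) * exp (c' * norm z) * (1 + norm z) ^ k)"
    and fm: "f \<in> borel_measurable lborel"
    and c': "c' > 0"
    and Z0: "\<And>q. pol q \<Longrightarrow> (LINT z|lborel. f z * q z * exp (\<i> * complex_of_real (0 \<bullet> z))) = 0"
  shows "pol q \<Longrightarrow> (LINT z|lborel. f z * q z * exp (\<i> * complex_of_real (s \<bullet> z))) = 0"
proof -
  assume q: "pol q"
  obtain N :: nat where N: "norm s / c' < real N" using reals_Archimedean2 by blast
  then have Npos: "real N > 0" using c' by (smt (verit) divide_nonneg_pos norm_ge_zero)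
  define u where "u = s /\<^sub>R real N"
  have u: "norm u \<le> c'"
  proof -
    have "norm u = norm s / real N" unfolding u_def using Npos by (simp add: divide_inverse mult.commute)
    also have "\<dots> \<le> c'" using N Npos c' by (simp add: field_simps)
    finally show ?thesis .
  qed
  have "\<forall>q. pol q \<longrightarrow> (LINT z|lborel. f z * q z * exp (\<i> * complex_of_real ((real k *\<^sub>R u) \<bullet> z))) = 0" for k
  proof (induction k)
    case 0 then show ?case using Z0 by simp
  next
    case (Suc k)
    have "pol q \<Longrightarrow> (LINT z|lborel. f z * q z * exp (\<i> * complex_of_real ((real k *\<^sub>R u + u) \<bullet> z))) = 0" for q
      by (rule Z_step[OF H fm _ u]) (use Suc in auto)
    then show ?case by (simp add: algebra_simps)
  qed
  moreover have "real N *\<^sub>R u = s" unfolding u_def using Npos by simp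
  ultimately show ?thesis using q by metis
qed



theorem propositionA1:
  fixes a :: "complex ^ 'd \<Rightarrow> complex"
  assumes loc: "locally_integrable a"
    and nonzero: "\<not> (AE z in lborel. a z = 0)"
    and decay: "\<exists>c>0. \<exists>C R. \<forall>z::complex ^ 'd. norm z \<ge> R \<longrightarrow>
                  norm (a z) * exp (- (norm z)\<^sup>2) \<le> C * exp (- c * norm z)"
  shows "\<exists>\<alpha> \<beta> :: 'd \<Rightarrow> nat.
           (LINT z|lborel. a z * cmonom \<alpha> z * cnj (cmonom \<beta> z)
                           * complex_of_real (exp (- (norm z)\<^sup>2))) \<noteq> 0"
proof (rule ccontr)
  assume "\<not> ?thesis"
  then have mom: "\<And>\<alpha> \<beta>. (LINT z|lborel. a z * cmonom \<alpha> z * cnj (cmonom \<beta> z)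
                           * complex_of_real (exp (- (norm z)\<^sup>2))) = 0" by blast
  obtain c C R0 where c: "c > 0" and dec: "\<And>z::complex ^ 'd. norm z \<ge> R0 \<Longrightarrow>
                  norm (a z) * exp (- (norm z)\<^sup>2) \<le> C * exp (- c * norm z)"
    using decay by blast
  define R where "R = max R0 0"
  have R: "R \<ge> 0" "R \<ge> R0" unfolding R_def by auto
  define c' where "c' = c / 2"
  have c': "c' > 0" unfolding c'_def using c by simp
  have am[measurable]: "a \<in> borel_measurable lborel" using loc unfolding locally_integrable_def by blast
  define f where "f z = a z * complex_of_real (exp (- (norm z)\<^sup>2))" for z
  have fm[measurable]: "f \<in> borel_measurable lborel" unfolding f_def by measurable
  have H: "integrable lborel (\<lambda>z. norm (f z) * exp (c' * norm z) * (1 + norm z) ^ k)" for k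
  proof -
    obtain K where K: "K > 0" "\<And>r. r \<ge> 0 \<Longrightarrow> (1 + r) ^ k \<le> K * exp (c / 4 * r)"
      using poly_exp_bound[of "c/4" k] c by auto
    define M where "M = exp (c' * R) * (1 + R) ^ k"
    have M: "M \<ge> 0" unfolding M_def using R by simp
    define B where "B z = M * norm (indicator (cball 0 R) z *\<^sub>R a z) + \<bar>C\<bar> * K * exp (- (c/4) * norm z)" for z :: "complex ^ 'd"
    have si: "set_integrable lborel (cball 0 R) a"
      using loc unfolding locally_integrable_def by simp
    have Bi: "integrable lborel B"
      unfolding B_def
    proof (intro Bochner_Integration.integrable_add integrable_mult_right)
      show "integrable lborel (\<lambda>z. norm (indicator (cball 0 R) z *\<^sub>R a z))"
        using si unfolding set_integrable_def by (rule integrable_norm)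
      show "integrable lborel (\<lambda>z::complex ^ 'd. exp (- (c / 4) * norm z))"
        by (rule integrable_exp_norm) (use c in simp)
    qed
    show ?thesis
    proof (rule Bochner_Integration.integrable_bound[OF Bi])
      show "(\<lambda>z. norm (f z) * exp (c' * norm z) * (1 + norm z) ^ k) \<in> borel_measurable lborel"
        by measurable
      show "AE z in lborel. norm (norm (f z) * exp (c' * norm z) * (1 + norm z) ^ k) \<le> norm (B z)"
      proof (intro AE_I2)
        fix z :: "complex ^ 'd"
        have nf: "norm (f z) = norm (a z) * exp (- (norm z)\<^sup>2)" unfolding f_def by (simp add: norm_mult)
        have B0: "0 \<le> M * norm (indicator (cball 0 R) z *\<^sub>R a z)" "0 \<le> \<bar>C\<bar> * K * exp (- (c/4) * norm z)"
          using M K by auto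
        have "norm (f z) * exp (c' * norm z) * (1 + norm z) ^ k \<le> B z"
        proof (cases "norm z \<le> R")
          case True
          have "norm (f z) \<le> norm (a z)" unfolding nf by (simp add: mult_left_le)
          moreover have "exp (c' * norm z) \<le> exp (c' * R)" using True c' by (simp add: mult_left_mono)
          moreover have "(1 + norm z) ^ k \<le> (1 + R) ^ k" using True by (intro power_mono) auto
          ultimately have "norm (f z) * exp (c' * norm z) * (1 + norm z) ^ k \<le> norm (a z) * exp (c' * R) * (1 + R) ^ k"
            by (intro mult_mono) auto
          also have "\<dots> = M * norm (indicator (cball 0 R) z *\<^sub>R a z)"
            using True unfolding M_def by (simp add: indicator_def)
          finally show ?thesis unfolding B_def using B0 by linarith
        next
          case False
          then have "norm z \<ge> R0" using R by linarith
          then have "norm (f z) \<le> \<bar>C\<bar> * exp (- c * norm z)"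
            unfolding nf using dec[of z] by (smt (verit) abs_ge_self exp_gt_zero mult_right_mono)
          moreover have "(1 + norm z) ^ k \<le> K * exp (c / 4 * norm z)" using K(2) by simp
          ultimately have "norm (f z) * exp (c' * norm z) * (1 + norm z) ^ k \<le>
              \<bar>C\<bar> * exp (- c * norm z) * exp (c' * norm z) * (K * exp (c / 4 * norm z))"
            by (intro mult_mono) auto
          also have "\<dots> = \<bar>C\<bar> * K * exp (- c * norm z + c' * norm z + c / 4 * norm z)"
            by (simp only: exp_add mult_ac)
          also have "- c * norm z + c' * norm z + c / 4 * norm z = - (c/4) * norm z"
            unfolding c'_def by (simp add: algebra_simps)
          finally show ?thesis unfolding B_def using B0 by linarith
        qed
        then show "norm (norm (f z) * exp (c' * norm z) * (1 + norm z) ^ k) \<le> norm (B z)"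
          by simp
      qed
    qed
  qed
  have hone: "norm (1::complex) \<le> exp (c' * norm z)" for z :: "complex ^ 'd" using c' by simp
  have Z0: "(LINT z|lborel. f z * q z * exp (\<i> * complex_of_real (0 \<bullet> z))) = 0" if q: "pol q" for q
  proof -
    have "integrable lborel (\<lambda>z. f z * p z * 1) \<and> (LINT z|lborel. f z * p z * 1) = 0" if "pol p" for p
      using that
    proof (induction rule: pol.induct)
      case (mono \<alpha> \<beta>)
      have "integrable lborel (\<lambda>z. f z * (cmonom \<alpha> z * cnj (cmonom \<beta> z)) * 1)"
        by (rule pol_integrable[OF H fm pol.mono]) (use hone in auto)
      moreover have "(LINT z|lborel. f z * (cmonom \<alpha> z * cnj (cmonom \<beta> z)) * 1) = 0"
        using mom[of \<alpha> \<beta>] unfolding f_def by (simp add: algebra_simps)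
      ultimately show ?case by simp
    next
      case (add p q)
      then show ?case by (simp add: distrib_left)
    next
      case (smult p c)
      then show ?case by (simp add: mult.left_commute)
    qed
    then show ?thesis using q by simp
  qed
  have Fz: "(LINT z|lborel. f z * exp (\<i> * complex_of_real (s \<bullet> z))) = 0" for s
    using Z_all[OF H fm c' Z0 pol_one, of s] by simp
  have fi: "integrable lborel f"
    using pol_integrable[OF H fm pol_one, of "\<lambda>_. 1"] hone by simp
  have "AE z in lborel. f z = 0" by (rule fourier_unique[OF fi Fz])
  then have "AE z in lborel. a z = 0" unfolding f_def by simp
  with nonzero show False by simp
qed


end
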